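(* Let $G=(V,E)$ be a simple, connected graph with maximum degree $\Delta$, and let $V = A \cup B \cup C$ be a partition into pairwise disjoint sets ($C$ possibly empty) satisfying: (1) every $v \in A$ satisfies $d_B(v) \geq d_A(v) + \max\{1, d_C(v)\}$; (2) every $v \in B$ satisfies $d_A(v) \geq d_B(v) + \max\{1, d_C(v)\}$; (3) $d_C(v) = 0$ for all $v \in C$; (4) every $v \in C$ satisfies $d_A(v) = d_B(v)$; (5) $\# E(A \cup B, C) + 2\# E(A,A) + 2\# E(B,B) \leq 2\# E(A,B)$. Then $$\# E(A \cup C, B) \geq \left(\frac{1}{2} + \frac{1}{3\Delta}\right)\textsc{MaxCut}(G).$$
   Context: For a vertex $v$ and a set $S \subseteq V$, $d_S(v)$ denotes the number of neighbors of $v$ in $S$. For disjoint $X,Y \subseteq V$, $\# E(X,Y)$ is the number of edges with one endpoint in $X$ and the other in $Y$; $\# E(X,X)$ is the number of edges with both endpoints in $X$. $\textsc{MaxCut}(G) = \max \# E(X,Y)$ over all partitions $V = X \cup Y$ into disjoint sets. *)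

theory Defs
  imports Complex_Main
begin

definition simple_graph :: "'a set \<Rightarrow> 'a set set \<Rightarrow> bool" where
  "simple_graph V E \<longleftrightarrow> finite V \<and> (\<forall>e\<in>E. e \<subseteq> V \<and> card e = 2)"

definition adj_rel :: "'a set set \<Rightarrow> ('a \<times> 'a) set" where
  "adj_rel E = {(u, v). {u, v} \<in> E}"

definition connected_graph :: "'a set \<Rightarrow> 'a set set \<Rightarrow> bool" where
  "connected_graph V E \<longleftrightarrow> V \<noteq> {} \<and> (\<forall>u\<in>V. \<forall>v\<in>V. (u, v) \<in> (adj_rel E)\<^sup>*)"

definition deg_in :: "'a set set \<Rightarrow> 'a set \<Rightarrow> 'a \<Rightarrow> nat" where
  "deg_in E S v = card {u \<in> S. {u, v} \<in> E}"

definition max_degree :: "'a set \<Rightarrow> 'a set set \<Rightarrow> nat" where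
  "max_degree V E = Max ((\<lambda>v. deg_in E V v) ` V)"

definition num_edges :: "'a set set \<Rightarrow> 'a set \<Rightarrow> 'a set \<Rightarrow> nat" where
  "num_edges E X Y = card {e \<in> E. \<exists>x\<in>X. \<exists>y\<in>Y. e = {x, y}}"

definition max_cut :: "'a set \<Rightarrow> 'a set set \<Rightarrow> nat" where
  "max_cut V E = Max ((\<lambda>X. num_edges E X (V - X)) ` Pow V)"

end

theory Submission
  imports Defs
begin

definition pc :: "'a set set \<Rightarrow> 'a set \<Rightarrow> 'a set \<Rightarrow> nat" where
  "pc E X Y = (\<Sum>u\<in>X. deg_in E Y u)"

lemma sg_finE: "simple_graph V E \<Longrightarrow> finite E"
  unfolding simple_graph_def by (meson PowI finite_Pow_iff finite_subset subsetI)

lemma sg_edge: "simple_graph V E \<Longrightarrow> e \<in> E \<Longrightarrow> \<exists>x y. x \<noteq> y \<and> x \<in> V \<and> y \<in> V \<and> e = {x, y}"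
proof -
  assume sg: "simple_graph V E" and e: "e \<in> E"
  have eV: "e \<subseteq> V" and c: "card e = 2" using sg e unfolding simple_graph_def by auto
  obtain x y where "e = {x, y}" "x \<noteq> y" using c card_2_iff by metis
  then show ?thesis using eV by auto
qed

lemma sg_pair: "simple_graph V E \<Longrightarrow> {u, v} \<in> E \<Longrightarrow> u \<noteq> v \<and> u \<in> V \<and> v \<in> V"
  unfolding simple_graph_def by (cases "u = v") auto

lemma deg_in_sum: "finite Y \<Longrightarrow> deg_in E Y u = (\<Sum>v\<in>Y. if {v,u}\<in>E then 1 else 0)"
  unfolding deg_in_def by (simp add: sum.inter_filter[symmetric])

lemma deg_in_union: "finite Y1 \<Longrightarrow> finite Y2 \<Longrightarrow> Y1 \<inter> Y2 = {} \<Longrightarrow>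
   deg_in E (Y1 \<union> Y2) u = deg_in E Y1 u + deg_in E Y2 u"
  by (simp add: deg_in_sum sum.union_disjoint)

lemma pc_union1: "finite X1 \<Longrightarrow> finite X2 \<Longrightarrow> X1 \<inter> X2 = {} \<Longrightarrow>
   pc E (X1 \<union> X2) Y = pc E X1 Y + pc E X2 Y"
  unfolding pc_def by (simp add: sum.union_disjoint)

lemma pc_union2: "finite X \<Longrightarrow> finite Y1 \<Longrightarrow> finite Y2 \<Longrightarrow> Y1 \<inter> Y2 = {} \<Longrightarrow>
   pc E X (Y1 \<union> Y2) = pc E X Y1 + pc E X Y2"
  unfolding pc_def by (simp add: deg_in_union sum.distrib)

lemma pc_sym: "finite X \<Longrightarrow> finite Y \<Longrightarrow> pc E X Y = pc E Y X"
proof -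
  assume fX: "finite X" and fY: "finite Y"
  have "pc E X Y = (\<Sum>u\<in>X. \<Sum>v\<in>Y. if {v,u}\<in>E then 1 else 0)"
    unfolding pc_def using fY by (simp add: deg_in_sum)
  also have "\<dots> = (\<Sum>v\<in>Y. \<Sum>u\<in>X. if {v,u}\<in>E then 1 else 0)"
    by (rule sum.swap)
  also have "\<dots> = (\<Sum>v\<in>Y. \<Sum>u\<in>X. if {u,v}\<in>E then 1 else 0)"
    by (simp add: insert_commute)
  also have "\<dots> = pc E Y X"
    unfolding pc_def using fX by (simp add: deg_in_sum)
  finally show ?thesis .
qed

lemma pc_card: "simple_graph V E \<Longrightarrow> X \<subseteq> V \<Longrightarrow>
   pc E X Y = card (SIGMA u:X. {v\<in>Y. {u,v}\<in>E})"
proof -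
  assume sg: "simple_graph V E" and X: "X \<subseteq> V"
  have fX: "finite X" using sg X unfolding simple_graph_def by (meson finite_subset)
  have fin: "finite {v\<in>Y. {u,v}\<in>E}" for u
    by (rule finite_subset[of _ V]) (use sg sg_pair in \<open>auto simp: simple_graph_def\<close>)
  have "card (SIGMA u:X. {v\<in>Y. {u,v}\<in>E}) = (\<Sum>u\<in>X. card {v\<in>Y. {u,v}\<in>E})"
    using fX fin by simp
  also have "\<dots> = pc E X Y" unfolding pc_def deg_in_def by (simp add: insert_commute)
  finally show ?thesis by simp
qed

lemma pc_disj: "simple_graph V E \<Longrightarrow> X \<subseteq> V \<Longrightarrow> X \<inter> Y = {} \<Longrightarrow> pc E X Y = num_edges E X Y"
proof -
  assume sg: "simple_graph V E" and X: "X \<subseteq> V" and d: "X \<inter> Y = {}"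
  have "bij_betw (\<lambda>(u,v). {u,v}) (SIGMA u:X. {v\<in>Y. {u,v}\<in>E}) {e \<in> E. \<exists>x\<in>X. \<exists>y\<in>Y. e = {x, y}}"
  proof (rule bij_betwI')
    show "\<And>p q. p \<in> (SIGMA u:X. {v\<in>Y. {u,v}\<in>E}) \<Longrightarrow> q \<in> (SIGMA u:X. {v\<in>Y. {u,v}\<in>E}) \<Longrightarrow>
      ((case p of (u,v) \<Rightarrow> {u,v}) = (case q of (u,v) \<Rightarrow> {u,v})) = (p = q)"
      using d by (auto simp: doubleton_eq_iff)
    show "\<And>p. p \<in> (SIGMA u:X. {v\<in>Y. {u,v}\<in>E}) \<Longrightarrow> (case p of (u,v) \<Rightarrow> {u,v}) \<in> {e \<in> E. \<exists>x\<in>X. \<exists>y\<in>Y. e = {x, y}}"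
      by auto
    show "\<And>e. e \<in> {e \<in> E. \<exists>x\<in>X. \<exists>y\<in>Y. e = {x, y}} \<Longrightarrow> \<exists>p\<in>(SIGMA u:X. {v\<in>Y. {u,v}\<in>E}). e = (case p of (u,v) \<Rightarrow> {u,v})"
      by auto
  qed
  then show ?thesis using pc_card[OF sg X] unfolding num_edges_def by (simp add: bij_betw_same_card)
qed

lemma pc_self: "simple_graph V E \<Longrightarrow> X \<subseteq> V \<Longrightarrow> pc E X X = 2 * num_edges E X X"
proof -
  assume sg: "simple_graph V E" and X: "X \<subseteq> V"
  define T where "T = {e \<in> E. \<exists>x\<in>X. \<exists>y\<in>X. e = {x, y}}"
  define S where "S = (SIGMA u:X. {v\<in>X. {u,v}\<in>E})"
  define F where "F e = {p \<in> S. (case p of (u,v) \<Rightarrow> {u,v}) = e}" for e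
  have fT: "finite T" using sg_finE[OF sg] unfolding T_def by simp
  have fX: "finite X" using sg X unfolding simple_graph_def by (meson finite_subset)
  have fS: "finite S" unfolding S_def using fX by simp
  have SU: "S = (\<Union>e\<in>T. F e)"
  proof
    show "S \<subseteq> (\<Union>e\<in>T. F e)"
    proof
      fix p assume p: "p \<in> S"
      obtain u v where uv: "p = (u, v)" by (cases p)
      have "u \<in> X" "v \<in> X" "{u,v} \<in> E" using p uv unfolding S_def by auto
      then have "{u,v} \<in> T" unfolding T_def by blast
      moreover have "p \<in> F {u,v}" unfolding F_def using p uv by simp
      ultimately show "p \<in> (\<Union>e\<in>T. F e)" by blast
    qed
    show "(\<Union>e\<in>T. F e) \<subseteq> S" unfolding F_def by blast
  qed
  have F2: "card (F e) = 2" if eT: "e \<in> T" for e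
  proof -
    have eE: "e \<in> E" using eT unfolding T_def by simp
    obtain x y where xy: "x \<in> X" "y \<in> X" "e = {x,y}" using eT unfolding T_def by blast
    then have xy_ne: "x \<noteq> y" using sg_pair[OF sg] eE by blast
    have "F e = {(x,y),(y,x)}"
    proof
      show "F e \<subseteq> {(x,y),(y,x)}"
      proof
        fix p assume p: "p \<in> F e"
        obtain u v where uv: "p = (u, v)" by (cases p)
        have "{u,v} = {x,y}" using p uv xy unfolding F_def by simp
        then show "p \<in> {(x,y),(y,x)}" using uv by (simp add: doubleton_eq_iff)
      qed
      have "(x,y) \<in> F e" "(y,x) \<in> F e" using xy eE unfolding F_def S_def by (simp_all add: insert_commute)
      then show "{(x,y),(y,x)} \<subseteq> F e" by simp
    qed
    then show ?thesis using xy_ne by simp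
  qed
  have disj: "\<forall>i\<in>T. \<forall>j\<in>T. i \<noteq> j \<longrightarrow> F i \<inter> F j = {}" unfolding F_def by blast
  have finF: "\<forall>i\<in>T. finite (F i)" using fS unfolding F_def by simp
  have "card S = (\<Sum>e\<in>T. card (F e))" unfolding SU
    by (rule card_UN_disjoint[OF fT finF disj])
  also have "\<dots> = 2 * card T" using F2 by simp
  finally show ?thesis using pc_card[OF sg X] unfolding num_edges_def S_def T_def by simp
qed


lemma card_E: "simple_graph V E \<Longrightarrow> num_edges E V V = card E"
proof -
  assume sg: "simple_graph V E"
  have "{e \<in> E. \<exists>x\<in>V. \<exists>y\<in>V. e = {x, y}} = E" using sg_edge[OF sg] by blast
  then show ?thesis unfolding num_edges_def by simp
qed

lemma max_cut_le: "simple_graph V E \<Longrightarrow> max_cut V E \<le> card E"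
  unfolding max_cut_def
  apply (rule Max.boundedI)
  using sg_finE[of V E] apply (auto simp: simple_graph_def num_edges_def intro!: card_mono)
  done

lemma deg_le_max: "simple_graph V E \<Longrightarrow> v \<in> V \<Longrightarrow> deg_in E V v \<le> max_degree V E"
  unfolding max_degree_def simple_graph_def by simp


theorem corollary4:
  fixes V :: "'a set" and E :: "'a set set" and A B C :: "'a set"
  assumes "simple_graph V E"
    and "connected_graph V E"
    and "A \<union> B \<union> C = V"
    and "A \<inter> B = {}" and "A \<inter> C = {}" and "B \<inter> C = {}"
    and "\<forall>v\<in>A. deg_in E B v \<ge> deg_in E A v + max 1 (deg_in E C v)"
    and "\<forall>v\<in>B. deg_in E A v \<ge> deg_in E B v + max 1 (deg_in E C v)"
    and "\<forall>v\<in>C. deg_in E C v = 0"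
    and "\<forall>v\<in>C. deg_in E A v = deg_in E B v"
    and "num_edges E (A \<union> B) C + 2 * num_edges E A A + 2 * num_edges E B B
           \<le> 2 * num_edges E A B"
  shows "real (num_edges E (A \<union> C) B)
           \<ge> (1/2 + 1 / (3 * real (max_degree V E))) * real (max_cut V E)"
proof -
  note sg = assms(1)
  have fV: "finite V" using sg unfolding simple_graph_def by simp
  have AV: "A \<subseteq> V" and BV: "B \<subseteq> V" and CV: "C \<subseteq> V" using assms(3) by auto
  have fA: "finite A" using AV fV finite_subset by auto
  have fB: "finite B" using BV fV finite_subset by auto
  have fC: "finite C" using CV fV finite_subset by auto
  define D where "D = max_degree V E"
  define p where "p = pc E A B"
  define s where "s = pc E A C"
  define \<alpha> where "\<alpha> = pc E A A"
  define \<beta> where "\<beta> = pc E B B"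
  define m where "m = card E"
  have pBA: "pc E B A = p" unfolding p_def using pc_sym fA fB by metis
  have pCA: "pc E C A = s" unfolding s_def using pc_sym fA fC by metis
  have pCB: "pc E C B = s"
  proof -
    have "pc E C B = pc E C A" unfolding pc_def using assms(10) by (intro sum.cong) auto
    then show ?thesis using pCA by simp
  qed
  have pBC: "pc E B C = s" using pCB pc_sym fB fC by metis
  have pCC: "pc E C C = 0" unfolding pc_def using assms(9) by simp
  have h1a: "p \<ge> \<alpha> + s"
  proof -
    have "(\<Sum>v\<in>A. deg_in E A v + deg_in E C v) \<le> (\<Sum>v\<in>A. deg_in E B v)"
      using assms(7) by (intro sum_mono) force
    then show ?thesis unfolding p_def s_def \<alpha>_def pc_def by (simp add: sum.distrib sum_Suc)
  qed
  have h1b: "p \<ge> \<alpha> + card A"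
  proof -
    have "(\<Sum>v\<in>A. deg_in E A v + 1) \<le> (\<Sum>v\<in>A. deg_in E B v)"
      using assms(7) by (intro sum_mono) force
    then show ?thesis unfolding p_def s_def \<alpha>_def pc_def by (simp add: sum.distrib sum_Suc)
  qed
  have h2a: "p \<ge> \<beta> + s"
  proof -
    have "(\<Sum>v\<in>B. deg_in E B v + deg_in E C v) \<le> (\<Sum>v\<in>B. deg_in E A v)"
      using assms(8) by (intro sum_mono) force
    then show ?thesis using pBA pBC unfolding \<beta>_def pc_def by (simp add: sum.distrib)
  qed
  have h2b: "p \<ge> \<beta> + card B"
  proof -
    have "(\<Sum>v\<in>B. deg_in E B v + 1) \<le> (\<Sum>v\<in>B. deg_in E A v)"
      using assms(8) by (intro sum_mono) force
    then show ?thesis using pBA unfolding \<beta>_def pc_def by (simp add: sum.distrib sum_Suc)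
  qed
  have V3: "V = A \<union> (B \<union> C)" using assms(3) by auto
  have dBC: "(B \<union> C) \<inter> A = {}" "A \<inter> (B \<union> C) = {}" using assms(4,5) by auto
  have pXV: "pc E X V = pc E X A + pc E X B + pc E X C" if "finite X" for X
    unfolding V3 using that fA fB fC dBC assms(6) by (simp add: pc_union2)
  have pVX: "pc E V X = pc E A X + pc E B X + pc E C X" for X
    unfolding V3 using fA fB fC dBC assms(6) by (simp add: pc_union1)
  have twom: "2 * m = \<alpha> + \<beta> + 2 * p + 4 * s"
  proof -
    have "2 * m = pc E V V" unfolding m_def using pc_self[OF sg, of V] card_E[OF sg] by simp
    also have "\<dots> = \<alpha> + \<beta> + 2 * p + 4 * s"
      using pVX pXV fA fB fC pBA pCA pCB pBC pCC unfolding p_def s_def \<alpha>_def \<beta>_def by simp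
    finally show ?thesis .
  qed
  have cut: "num_edges E (A \<union> C) B = p + s"
  proof -
    have "num_edges E (A \<union> C) B = pc E (A \<union> C) B"
    proof -
      have "(A \<union> C) \<inter> B = {}" "A \<union> C \<subseteq> V" using AV CV assms(4,6) by auto
      then show ?thesis using pc_disj[OF sg, of "A \<union> C" B] by simp
    qed
    also have "\<dots> = p + s" using pc_union1[OF fA fC assms(5)] pCB unfolding p_def by simp
    finally show ?thesis .
  qed
  have deg: "\<alpha> + \<beta> + 2 * p + 2 * s \<le> D * (card A + card B)"
  proof -
    have "pc E (A \<union> B) V \<le> (\<Sum>v\<in>A \<union> B. D)" unfolding pc_def D_def
      using AV BV by (intro sum_mono deg_le_max[OF sg]) auto
    also have "\<dots> = D * (card A + card B)" using fA fB assms(4) by (simp add: card_Un_disjoint)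
    finally have "pc E (A \<union> B) V \<le> D * (card A + card B)" .
    moreover have "pc E (A \<union> B) V = \<alpha> + \<beta> + 2 * p + 2 * s"
      using pc_union1[OF fA fB assms(4)] pXV fA fB pBA pBC unfolding p_def s_def \<alpha>_def \<beta>_def by simp
    ultimately show ?thesis by simp
  qed
  have D1: "s = 0" if "D = 1"
  proof -
    have "deg_in E A v = 0" if v: "v \<in> C" for v
    proof -
      have "deg_in E V v = deg_in E A v + deg_in E B v + deg_in E C v"
        unfolding V3 using fA fB fC dBC assms(6) by (simp add: deg_in_union)
      moreover have "deg_in E V v \<le> 1" using deg_le_max[OF sg] v CV \<open>D = 1\<close> D_def by auto
      ultimately show ?thesis using assms(10) v by auto
    qed
    then show ?thesis using pCA unfolding pc_def by simp
  qed
  define y where "y = 2 * p - \<alpha> - \<beta>"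
  have y: "y \<ge> card A + card B" "y \<ge> 2 * s" "4 * (p + s) = 2 * m + y"
    using h1a h1b h2a h2b twom unfolding y_def by auto
  have Dy: "D * y \<ge> 2 * m - 2 * s"
  proof -
    have "D * y \<ge> D * (card A + card B)" using y by simp
    then show ?thesis using deg twom by linarith
  qed
  have key: "3 * D * y \<ge> 4 * m"
  proof (cases "D \<ge> 2")
    case True
    have "4 * s \<le> D * (2 * s)" using True by simp
    also have "\<dots> \<le> D * y" using y by simp
    finally show ?thesis using Dy twom by linarith
  next
    case False
    then consider "D = 0" | "D = 1" by linarith
    then show ?thesis
    proof cases
      case 1
      then show ?thesis using Dy twom by simp
    next
      case 2
      then show ?thesis using Dy D1 by simp
    qed
  qed
  have mc: "real (max_cut V E) \<le> real m" using max_cut_le[OF sg] m_def by simp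
  have cutr: "4 * real (num_edges E (A \<union> C) B) = 2 * real m + real y"
    using y(3) cut by (metis of_nat_add of_nat_mult of_nat_numeral)
  show ?thesis
  proof (cases "D = 0")
    case True
    have "(1/2 + 1 / (3 * real (max_degree V E))) * real (max_cut V E) = real (max_cut V E) / 2"
      using True D_def by simp
    moreover have "real (max_cut V E) / 2 \<le> real (num_edges E (A \<union> C) B)"
      using mc cutr by linarith
    ultimately show ?thesis by linarith
  next
    case False
    have keyr: "3 * real D * real y \<ge> 4 * real m" using key
      by (metis of_nat_le_iff of_nat_mult of_nat_numeral)
    have "(1/2 + 1 / (3 * real D)) * real (max_cut V E) \<le> (1/2 + 1 / (3 * real D)) * real m"
      using mc by (intro mult_left_mono) auto
    also have "\<dots> = real m / 2 + real m / (3 * real D)" by (simp add: algebra_simps)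
    also have "real m / (3 * real D) \<le> real y / 4"
      using keyr False by (simp add: divide_simps mult_ac)
    finally show ?thesis using cutr D_def by simp
  qed
qed

end
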